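(* Let $\mathbf X=\{X_n\}$, $\mathbf Z=\{Z_n\}$ be general sources with given couplings $P_{Z_n|X_n}$, and let $\mathbf W=\{W_{Y_n|X_n}\}$ be a general channel. If $\mathbf Z$ is an approximating source for $\mathbf W$ given $\mathbf X$, then for every $\epsilon\in(0,1)$ and every $\gamma>0$, $$\lim_{n\to\infty}\mathbb E_{P_{X_n}}\Big[\mu\big(\{\delta\in[0,1-\epsilon): c_n^{z|x}(\delta+\epsilon,X_n)-c_n^{w}(\delta,X_n)<-\gamma\}\big)\Big]=0 .$$
   Context: Logarithms are natural. For each $n$, $X_n$ and $Z_n$ are jointly distributed random variables on countable sets $\mathcal X_n$, $\mathcal Z_n$, with joint law determined by the pmf $P_{X_n}$ and a conditional pmf $P_{Z_n|X_n}$. The channel $W_{Y_n|X_n}(\cdot|x)$ is a pmf on a countable set $\mathcal Y_n$ for each $x\in\mathcal X_n$. For a random variable $Z$ on a countable set $\mathcal Z$ with pmf $P_Z$, list the elements of positive probability as $z_1,z_2,\dots$ (a finite or countably infinite list) with $P_Z(z_1)\ge P_Z(z_2)\ge\cdots$ (ties broken arbitrarily). Set $\delta_0=0$ and $\delta_k=\sum_{i\le k}P_Z(z_i)$. For $\delta\in[0,1)$ define $c^z(\delta)=\log\frac{1}{P_Z(z_k)}$, where $k$ is the unique index with $\delta\in[\delta_{k-1},\delta_k)$. For $x\in\mathcal X_n$, $c_n^{z|x}(\cdot,x)$ is this function for the pmf $P_{Z_n|X_n}(\cdot|x)$, and $c_n^{w}(\cdot,x)$ is this function for the pmf $W_{Y_n|X_n}(\cdot|x)$.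 $\mu$ is Lebesgue measure. The variational distance is $d(P,Q)=\sum_a|P(a)-Q(a)|$. $\mathbf Z$ is an approximating source for $\mathbf W$ given $\mathbf X$ if there exist deterministic maps $\varphi_n:\mathcal X_n\times\mathcal Z_n\to\mathcal Y_n$ such that $$\lim_{n\to\infty}d\big(P_{X_nY_n},P_{X_n,\varphi_n(X_n,Z_n)}\big)=0,$$ where $P_{X_nY_n}(x,y)=P_{X_n}(x)W_{Y_n|X_n}(y|x)$. *)

theory Defs
  imports "HOL-Probability.Probability"
begin

definition var_dist :: "'a pmf \<Rightarrow> 'a pmf \<Rightarrow> real" where
  "var_dist P Q = (\<Sum>\<^sub>\<infinity> a. \<bar>pmf P a - pmf Q a\<bar>)"

definition dec_enum :: "'a pmf \<Rightarrow> (nat \<Rightarrow> 'a) \<Rightarrow> enat \<Rightarrow> bool" where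
  "dec_enum p e N \<longleftrightarrow>
     bij_betw e {k. enat k < N} (set_pmf p) \<and>
     (\<forall>i j. enat j < N \<longrightarrow> i \<le> j \<longrightarrow> pmf p (e j) \<le> pmf p (e i))"

text \<open>The function c(delta): ln(1/P(z_k)) where delta lies in [delta_{k-1}, delta_k)
  (here with 0-based index k, delta_{k-1} = sum_{i<k}, delta_k = sum_{i<k+1}).
  Ties are broken by an arbitrary (chosen) enumeration.\<close>
definition cfun :: "'a pmf \<Rightarrow> real \<Rightarrow> real" where
  "cfun p \<delta> =
     (let (e, N) = (SOME (e, N). dec_enum p e N);
          k = (THE k. enat k < N \<and> (\<Sum>i<k. pmf p (e i)) \<le> \<delta> \<and> \<delta> < (\<Sum>i<Suc k. pmf p (e i)))
      in ln (1 / pmf p (e k)))"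

definition joint_channel :: "'x pmf \<Rightarrow> ('x \<Rightarrow> 'y pmf) \<Rightarrow> ('x \<times> 'y) pmf" where
  "joint_channel PX W = bind_pmf PX (\<lambda>x. map_pmf (\<lambda>y. (x, y)) (W x))"

definition joint_simulated :: "'x pmf \<Rightarrow> ('x \<Rightarrow> 'z pmf) \<Rightarrow> ('x \<Rightarrow> 'z \<Rightarrow> 'y) \<Rightarrow> ('x \<times> 'y) pmf" where
  "joint_simulated PX PZX \<phi> = bind_pmf PX (\<lambda>x. map_pmf (\<lambda>z. (x, \<phi> x z)) (PZX x))"

definition approximating_source ::
  "(nat \<Rightarrow> 'x pmf) \<Rightarrow> (nat \<Rightarrow> 'x \<Rightarrow> 'z pmf) \<Rightarrow> (nat \<Rightarrow> 'x \<Rightarrow> 'y pmf) \<Rightarrow> bool" where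
  "approximating_source PX PZX W \<longleftrightarrow>
     (\<exists>\<phi> :: nat \<Rightarrow> 'x \<Rightarrow> 'z \<Rightarrow> 'y.
        (\<lambda>n. var_dist (joint_channel (PX n) (W n)) (joint_simulated (PX n) (PZX n) (\<phi> n)))
          \<longlonglongrightarrow> 0)"

end

theory Submission imports Defs "HOL-Probability.Product_PMF" begin

lemma finite_pmf_ge:
  fixes p :: "'a pmf"
  assumes c: "c > 0"
  shows "finite {a. c \<le> pmf p a}"
proof (rule ccontr)
  assume inf: "infinite {a. c \<le> pmf p a}"
  obtain n :: nat where n: "1 / c < real n" using reals_Archimedean2 by blast
  obtain F where F: "F \<subseteq> {a. c \<le> pmf p a}" "finite F" "card F = n"
    using infinite_arbitrarily_large[OF inf] by blast
  have "real n * c = (\<Sum>a\<in>F. c)" using F by simp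
  also have "\<dots> \<le> sum (pmf p) F" using F by (intro sum_mono) auto
  also have "\<dots> = measure p F" using F by (simp add: measure_measure_pmf_finite)
  also have "\<dots> \<le> 1" by simp
  finally have "real n * c \<le> 1" .
  with n c show False by (simp add: field_simps)
qed

lemma dec_enum_ex:
  fixes p :: "'a::countable pmf"
  shows "\<exists>e N. dec_enum p e N"
proof -
  define S where "S = set_pmf p"
  define lt where "lt b a \<longleftrightarrow> pmf p a < pmf p b \<or> (pmf p b = pmf p a \<and> to_nat b < to_nat a)" for a b
  define L where "L a = {b \<in> S. lt b a}" for a
  define r where "r a = card (L a)" for a
  have finL: "finite (L a)" if "a \<in> S" for a
  proof -
    have "pmf p a > 0" using that by (simp add: S_def pmf_positive)
    then have "finite {b. pmf p a \<le> pmf p b}" by (rule finite_pmf_ge)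
    moreover have "L a \<subseteq> {b. pmf p a \<le> pmf p b}" by (auto simp: L_def lt_def)
    ultimately show ?thesis by (rule finite_subset[rotated])
  qed
  have trans: "lt c a" if "lt c b" "lt b a" for a b c using that by (auto simp: lt_def)
  have irr: "\<not> lt a a" for a by (auto simp: lt_def)
  have total: "lt a b \<or> lt b a" if "a \<noteq> b" for a b
    using that by (auto simp: lt_def) (metis linorder_neqE_linordered_idom linorder_neqE_nat to_nat_split)
  have rmono: "r b < r a" if "a \<in> S" "b \<in> S" "lt b a" for a b
  proof -
    have "L b \<subseteq> L a" using that trans by (auto simp: L_def)
    moreover have "b \<in> L a" "b \<notin> L b" using that irr by (auto simp: L_def)
    ultimately have "L b \<subset> L a" by blast
    then show ?thesis unfolding r_def using finL[OF that(1)] by (rule psubset_card_mono[rotated])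
  qed
  have rinj: "inj_on r S"
    by (rule inj_onI) (metis less_irrefl rmono total)
  have down: "j \<in> r ` S" if "a \<in> S" "j < r a" for a j
  proof -
    have sub: "r ` L a \<subseteq> {..<r a}" using rmono that(1) by (auto simp: L_def)
    have "card (r ` L a) = r a" using rinj by (subst card_image) (auto simp: r_def L_def intro: inj_on_subset)
    then have "r ` L a = {..<r a}" using sub by (intro card_subset_eq) auto
    then have "j \<in> r ` L a" using that by auto
    then show ?thesis by (auto simp: L_def)
  qed
  define N where "N = (if finite S then enat (card S) else \<infinity>)"
  have img: "r ` S = {k. enat k < N}"
  proof (cases "finite S")
    case True
    have "r ` S \<subseteq> {..<card S}"
    proof
      fix x assume x: "x \<in> r ` S"
      have "{..x} \<subseteq> r ` S" using x down by (auto simp: le_less)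
      then have "card {..x} \<le> card (r ` S)" using True by (intro card_mono) auto
      also have "\<dots> = card S" using rinj by (simp add: card_image)
      finally show "x \<in> {..<card S}" by simp
    qed
    moreover have "card (r ` S) = card {..<card S}" using rinj by (simp add: card_image)
    ultimately have "r ` S = {..<card S}" by (intro card_subset_eq) auto
    then show ?thesis using True by (auto simp: N_def)
  next
    case False
    have "k \<in> r ` S" for k
    proof -
      have "infinite (r ` S)" using False rinj finite_imageD by blast
      then obtain x where "x \<in> r ` S" "k < x" using infinite_nat_iff_unbounded by blast
      then show ?thesis using down by auto
    qed
    then show ?thesis using False by (auto simp: N_def)
  qed
  define e where "e = inv_into S r"
  have bij: "bij_betw e {k. enat k < N} S"
    unfolding e_def using rinj img by (metis bij_betw_imageI bij_betw_inv_into)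
  have "pmf p (e j) \<le> pmf p (e i)" if "enat j < N" "i \<le> j" for i j
  proof (rule ccontr)
    assume "\<not> ?thesis"
    then have "lt (e j) (e i)" by (auto simp: lt_def)
    moreover have "i \<in> r ` S" "j \<in> r ` S" using that img by (auto intro: le_less_trans[of "enat i" "enat j"])
    ultimately have "r (e j) < r (e i)" using rmono e_def by (auto intro!: rmono inv_into_into)
    moreover have "r (e j) = j" "r (e i) = i" using \<open>i \<in> r ` S\<close> \<open>j \<in> r ` S\<close>
      by (auto simp: e_def f_inv_into_f)
    ultimately show False using that by simp
  qed
  then have "dec_enum p e N" using bij unfolding dec_enum_def S_def by blast
  then show ?thesis by blast
qed

lemma measure_set_pmf_1: "measure (measure_pmf p) (set_pmf p) = 1"
  by (subst measure_pmf.prob_eq_1) (auto intro: AE_pmfI)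

lemma cfun_char:
  fixes p :: "'a::countable pmf"
  assumes t: "0 \<le> t" "t < 1"
  shows "\<exists>v>0. cfun p t = ln (1/v) \<and> t < measure p {a. v \<le> pmf p a} \<and> measure p {a. v < pmf p a} \<le> t"
proof -
  obtain e N where eN: "(SOME (e,N). dec_enum p e N) = (e,N)" by (metis surj_pair)
  have "\<exists>x. (case x of (e,N) \<Rightarrow> dec_enum p e N)" using dec_enum_ex by auto
  from someI_ex[OF this] have de: "dec_enum p e N" by (simp add: eN)
  then have bij: "bij_betw e {k. enat k < N} (set_pmf p)"
    and mono: "\<And>i j. enat j < N \<Longrightarrow> i \<le> j \<Longrightarrow> pmf p (e j) \<le> pmf p (e i)"
    by (auto simp: dec_enum_def)
  define s where "s m = (\<Sum>i<m. pmf p (e i))" for m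
  have smono: "s a \<le> s b" if "a \<le> b" for a b
    unfolding s_def using that by (intro sum_mono2) auto
  have sm: "s m = measure p (e ` {..<m})" if "enat m \<le> N" for m
  proof -
    have "inj_on e {..<m}" using bij_betw_imp_inj_on[OF bij]
      by (rule inj_on_subset) (use that in \<open>auto intro: less_le_trans[of _ "enat m"]\<close>)
    then show ?thesis by (simp add: measure_measure_pmf_finite sum.reindex s_def)
  qed
  have ex: "\<exists>m. enat m \<le> N \<and> t < s m"
  proof (cases N)
    case (enat n)
    have "e ` {..<n} = set_pmf p" using bij_betw_imp_surj_on[OF bij] enat by (simp add: lessThan_def)
    then have "s n = 1" using sm[of n] enat by (simp add: measure_set_pmf_1)
    then show ?thesis using enat t by auto
  next
    case infinity
    have "(\<lambda>m. measure p (e ` {..<m})) \<longlonglongrightarrow> measure p (\<Union>m. e ` {..<m})"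
      by (rule measure_pmf.finite_Lim_measure_incseq) (auto simp: incseq_def)
    moreover have "(\<Union>m. e ` {..<m}) = set_pmf p"
      using bij_betw_imp_surj_on[OF bij] infinity by auto
    ultimately have "(\<lambda>m. measure p (e ` {..<m})) \<longlonglongrightarrow> 1" by (simp add: measure_set_pmf_1)
    then have "eventually (\<lambda>m. t < measure p (e ` {..<m})) sequentially"
      using t by (intro order_tendstoD) auto
    then obtain m where "t < measure p (e ` {..<m})" by (auto dest: eventually_happens)
    then show ?thesis using sm infinity by auto
  qed
  define m0 where "m0 = (LEAST m. enat m \<le> N \<and> t < s m)"
  have m0: "enat m0 \<le> N \<and> t < s m0" unfolding m0_def using ex by (rule LeastI_ex)
  have "m0 \<noteq> 0" proof assume "m0 = 0" then show False using m0 t by (simp add: s_def) qed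
  then obtain k where k: "m0 = Suc k" by (cases m0) auto
  have kN: "enat k < N" using m0 k by (metis Suc_ile_eq)
  have tk: "t < s (Suc k)" using m0 k by simp
  have sk: "s k \<le> t"
  proof (rule ccontr)
    assume "\<not> ?thesis"
    then have "enat k \<le> N \<and> t < s k" using kN by auto
    then have "m0 \<le> k" unfolding m0_def by (rule Least_le)
    then show False using k by simp
  qed
  have the: "(THE k. enat k < N \<and> (\<Sum>i<k. pmf p (e i)) \<le> t \<and> t < (\<Sum>i<Suc k. pmf p (e i))) = k"
  proof (rule the_equality)
    show "enat k < N \<and> (\<Sum>i<k. pmf p (e i)) \<le> t \<and> t < (\<Sum>i<Suc k. pmf p (e i))"
      using kN sk tk by (simp add: s_def)
  next
    fix k' assume "enat k' < N \<and> (\<Sum>i<k'. pmf p (e i)) \<le> t \<and> t < (\<Sum>i<Suc k'. pmf p (e i))"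
    then have k': "s k' \<le> t" "t < s (Suc k')" by (auto simp: s_def)
    show "k' = k"
    proof (rule ccontr)
      assume "k' \<noteq> k"
      then have "Suc k' \<le> k \<or> Suc k \<le> k'" by auto
      then show False using smono k' sk tk by (meson le_less_trans not_le order_trans)
    qed
  qed
  have cf: "cfun p t = ln (1 / pmf p (e k))"
    unfolding cfun_def eN using the by (simp add: Let_def)
  define v where "v = pmf p (e k)"
  have ek: "e k \<in> set_pmf p" using bij kN by (auto dest: bij_betwE)
  then have vpos: "v > 0" by (simp add: v_def pmf_positive)
  have "e ` {..<Suc k} \<subseteq> {a. v \<le> pmf p a}"
    using mono[OF kN] by (auto simp: v_def)
  then have "measure p (e ` {..<Suc k}) \<le> measure p {a. v \<le> pmf p a}"
    by (intro measure_pmf.finite_measure_mono) auto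
  moreover have "s (Suc k) = measure p (e ` {..<Suc k})" using kN by (intro sm) (simp add: Suc_ile_eq)
  ultimately have A: "t < measure p {a. v \<le> pmf p a}" using tk by simp
  have "{a. v < pmf p a} \<subseteq> e ` {..<k}"
  proof
    fix a assume a: "a \<in> {a. v < pmf p a}"
    then have "a \<in> set_pmf p" using vpos by (simp add: set_pmf_iff)
    then obtain i where i: "enat i < N" "a = e i" using bij_betw_imp_surj_on[OF bij] by auto
    have "i < k"
    proof (rule ccontr)
      assume "\<not> i < k"
      then have "pmf p (e i) \<le> v" using mono[OF i(1)] by (simp add: v_def)
      then show False using a i by simp
    qed
    then show "a \<in> e ` {..<k}" using i by auto
  qed
  then have "measure p {a. v < pmf p a} \<le> measure p (e ` {..<k})"
    by (intro measure_pmf.finite_measure_mono) auto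
  moreover have "s k = measure p (e ` {..<k})" using kN by (intro sm) simp
  ultimately have B: "measure p {a. v < pmf p a} \<le> t" using sk by simp
  show ?thesis using A B vpos cf by (auto simp: v_def)
qed

lemma infsum_diff_real:
  fixes f g :: "'a \<Rightarrow> real"
  assumes "f summable_on A" "g summable_on A"
  shows "infsum (\<lambda>x. f x - g x) A = infsum f A - infsum g A"
    and "(\<lambda>x. f x - g x) summable_on A"
proof -
  have g': "(\<lambda>x. - g x) summable_on A" using assms summable_on_uminus by blast
  show "infsum (\<lambda>x. f x - g x) A = infsum f A - infsum g A"
    using infsum_add[OF assms(1) g'] infsum_uminus[of g A] by simp
  show "(\<lambda>x. f x - g x) summable_on A" using summable_on_add[OF assms(1) g'] by simp
qed

lemma pmf_summable_on: "pmf p summable_on A"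
proof -
  have "Infinite_Sum.abs_summable_on (pmf p) A"
    using abs_summable_equivalent pmf_abs_summable by blast
  then show ?thesis by (rule abs_summable_summable)
qed

lemma prob_infsum: "measure (measure_pmf p) A = infsum (pmf p) A"
  by (simp add: measure_pmf_conv_infsetsum infsetsum_infsum[OF pmf_abs_summable])

lemma absdiff_summable: "(\<lambda>y. \<bar>pmf p y - pmf p' y\<bar>) summable_on A"
proof (rule summable_on_comparison_test)
  show "(\<lambda>y. pmf p y + pmf p' y) summable_on A"
    by (intro summable_on_add pmf_summable_on)
qed (auto simp: abs_le_iff)

lemma absdiff_bound:
  assumes "g summable_on A" "\<And>y. y \<in> A \<Longrightarrow> g y \<le> \<bar>pmf p y - pmf p' y\<bar>"
  shows "infsum g A \<le> (\<Sum>\<^sub>\<infinity> y. \<bar>pmf p y - pmf p' y\<bar>)"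
  using assms absdiff_summable by (intro infsum_mono_neutral) auto

lemma diff_prob_bound:
  "measure (measure_pmf p') A - measure (measure_pmf p) A \<le> (\<Sum>\<^sub>\<infinity> y. \<bar>pmf p y - pmf p' y\<bar>)"
proof -
  have "measure (measure_pmf p') A - measure (measure_pmf p) A = infsum (\<lambda>y. pmf p' y - pmf p y) A"
    by (simp add: prob_infsum infsum_diff_real pmf_summable_on)
  also have "\<dots> \<le> (\<Sum>\<^sub>\<infinity> y. \<bar>pmf p y - pmf p' y\<bar>)"
    by (intro absdiff_bound infsum_diff_real(2) pmf_summable_on) auto
  finally show ?thesis .
qed

lemma key:
  fixes p :: "'y::countable pmf" and q :: "'z::countable pmf"
  assumes "0 \<le> \<delta>" "\<epsilon> > 0" "\<delta> + \<epsilon> < 1" "\<gamma> > 0"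
    and bad: "cfun q (\<delta>+\<epsilon>) - cfun p \<delta> < -\<gamma>"
  shows "(1 - exp(-\<gamma>)) * \<epsilon> \<le> (\<Sum>\<^sub>\<infinity> y. \<bar>pmf p y - pmf (map_pmf \<phi> q) y\<bar>)"
proof -
  define D where "D = (\<Sum>\<^sub>\<infinity> y. \<bar>pmf p y - pmf (map_pmf \<phi> q) y\<bar>)"
  define P' where "P' = map_pmf \<phi> q"
  obtain vq where vq: "vq > 0" "cfun q (\<delta>+\<epsilon>) = ln (1/vq)" "\<delta>+\<epsilon> < measure q {z. vq \<le> pmf q z}"
    using cfun_char[of "\<delta>+\<epsilon>" q] assms by auto
  obtain vp where vp: "vp > 0" "cfun p \<delta> = ln (1/vp)" "measure p {y. vp < pmf p y} \<le> \<delta>"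
    using cfun_char[of "\<delta>" p] assms by auto
  have "ln vp + \<gamma> < ln vq" using bad vq vp by (simp add: ln_div)
  then have "exp (ln vp + \<gamma>) < exp (ln vq)" by simp
  then have vpq: "vp * exp \<gamma> < vq" using vp vq by (simp add: exp_add)
  define A where "A = {z. vq \<le> pmf q z}"
  define B where "B = \<phi> ` A"
  define C where "C = B \<inter> {y. pmf p y \<le> vp}"
  have "measure q A \<le> measure q (\<phi> -` B)"
    by (intro measure_pmf.finite_measure_mono) (auto simp: B_def)
  then have hB: "\<delta>+\<epsilon> < measure P' B" using vq by (simp add: P'_def A_def measure_map_pmf)
  have d1: "measure P' B - measure p B \<le> D" unfolding D_def P'_def by (rule diff_prob_bound)
  have "measure p (B - C) \<le> measure p {y. vp < pmf p y}"
    by (intro measure_pmf.finite_measure_mono) (auto simp: C_def)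
  then have hBC: "measure p (B - C) \<le> \<delta>" using vp by simp
  have "measure p B \<le> measure p (C \<union> (B - C))"
    by (intro measure_pmf.finite_measure_mono) auto
  also have "\<dots> \<le> measure p C + measure p (B - C)"
    by (rule measure_subadditive) auto
  finally have hC: "\<epsilon> - D < measure p C" using hB d1 hBC by simp
  have pt: "(exp \<gamma> - 1) * pmf p y \<le> \<bar>pmf p y - pmf P' y\<bar>" if y: "y \<in> C" for y
  proof -
    obtain z where z: "z \<in> A" "y = \<phi> z" using y by (auto simp: C_def B_def)
    have "pmf q z = measure q {z}" by (simp add: measure_pmf_single)
    also have "\<dots> \<le> measure q (\<phi> -` {y})" using z by (intro measure_pmf.finite_measure_mono) auto
    also have "\<dots> = pmf P' y" by (simp add: P'_def pmf_map)
    finally have "vq \<le> pmf P' y" using z by (simp add: A_def)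
    moreover have "pmf p y \<le> vp" using y by (simp add: C_def)
    moreover have "exp \<gamma> > 1" using assms by simp
    ultimately have "exp \<gamma> * pmf p y \<le> pmf P' y" using vpq
      by (smt (verit, best) mult_left_mono pmf_nonneg mult.commute)
    then show ?thesis by (simp add: algebra_simps)
  qed
  have "(exp \<gamma> - 1) * measure p C = infsum (\<lambda>y. (exp \<gamma> - 1) * pmf p y) C"
    by (simp add: prob_infsum infsum_cmult_right')
  also have "\<dots> \<le> D" unfolding D_def P'_def[symmetric]
    using pt by (intro absdiff_bound summable_on_cmult_right pmf_summable_on) auto
  finally have "(exp \<gamma> - 1) * measure p C \<le> D" .
  moreover have "(exp \<gamma> - 1) * (\<epsilon> - D) \<le> (exp \<gamma> - 1) * measure p C"
    using hC assms by (intro mult_left_mono) auto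
  ultimately have "(exp \<gamma> - 1) * \<epsilon> \<le> exp \<gamma> * D" by (simp add: algebra_simps)
  then have "(1 - exp (-\<gamma>)) * \<epsilon> \<le> D"
    by (simp add: exp_minus field_simps)
  then show ?thesis by (simp add: D_def)
qed

lemma pmf_bind_Pair:
  "pmf (bind_pmf PX (\<lambda>x. map_pmf (Pair x) (K x))) (x,y) = pmf PX x * pmf (K x) y"
proof -
  have eq: "pmf (map_pmf (Pair a) (K a)) (x,y) = indicator {x} a * pmf (K x) y" for a
  proof (cases "a = x")
    case True
    then show ?thesis using pmf_map_inj'[of "Pair x" "K x" y] by (simp add: inj_on_def)
  next
    case False
    then show ?thesis by (subst pmf_map_outside) auto
  qed
  show ?thesis by (simp add: pmf_bind eq measure_pmf_single)
qed

lemma var_dist_joint: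
  "var_dist (bind_pmf PX (\<lambda>x. map_pmf (Pair x) (K1 x))) (bind_pmf PX (\<lambda>x. map_pmf (Pair x) (K2 x)))
     = (\<Sum>\<^sub>\<infinity> x. pmf PX x * (\<Sum>\<^sub>\<infinity> y. \<bar>pmf (K1 x) y - pmf (K2 x) y\<bar>))"
proof -
  define J1 where "J1 = bind_pmf PX (\<lambda>x. map_pmf (Pair x) (K1 x))"
  define J2 where "J2 = bind_pmf PX (\<lambda>x. map_pmf (Pair x) (K2 x))"
  have "(\<lambda>(x,y). \<bar>pmf J1 (x,y) - pmf J2 (x,y)\<bar>) summable_on (Sigma UNIV (\<lambda>_. UNIV))"
    proof -
    have "(\<lambda>(x,y). \<bar>pmf J1 (x,y) - pmf J2 (x,y)\<bar>) = (\<lambda>z. \<bar>pmf J1 z - pmf J2 z\<bar>)" by auto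
    then show ?thesis using absdiff_summable[of J1 J2 UNIV] by simp
  qed
  then have "(\<Sum>\<^sub>\<infinity> x. \<Sum>\<^sub>\<infinity> y. \<bar>pmf J1 (x,y) - pmf J2 (x,y)\<bar>)
      = (\<Sum>\<^sub>\<infinity> (x,y)\<in>Sigma UNIV (\<lambda>_. UNIV). \<bar>pmf J1 (x,y) - pmf J2 (x,y)\<bar>)"
    by (rule infsum_Sigma'_banach)
  also have "\<dots> = var_dist J1 J2"
  proof -
    have "(\<lambda>(x,y). \<bar>pmf J1 (x,y) - pmf J2 (x,y)\<bar>) = (\<lambda>z. \<bar>pmf J1 z - pmf J2 z\<bar>)" by auto
    then show ?thesis by (simp add: var_dist_def)
  qed
  finally have "var_dist J1 J2 = (\<Sum>\<^sub>\<infinity> x. \<Sum>\<^sub>\<infinity> y. \<bar>pmf J1 (x,y) - pmf J2 (x,y)\<bar>)" by simp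
  also have "\<dots> = (\<Sum>\<^sub>\<infinity> x. pmf PX x * (\<Sum>\<^sub>\<infinity> y. \<bar>pmf (K1 x) y - pmf (K2 x) y\<bar>))"
  proof (rule infsum_cong)
    fix x
    have "(\<Sum>\<^sub>\<infinity> y. \<bar>pmf J1 (x,y) - pmf J2 (x,y)\<bar>) = (\<Sum>\<^sub>\<infinity> y. pmf PX x * \<bar>pmf (K1 x) y - pmf (K2 x) y\<bar>)"
      by (simp add: J1_def J2_def pmf_bind_Pair right_diff_distrib[symmetric] abs_mult)
    also have "\<dots> = pmf PX x * (\<Sum>\<^sub>\<infinity> y. \<bar>pmf (K1 x) y - pmf (K2 x) y\<bar>)"
      by (rule infsum_cmult_right')
    finally show "(\<Sum>\<^sub>\<infinity> y. \<bar>pmf J1 (x,y) - pmf J2 (x,y)\<bar>) = pmf PX x * (\<Sum>\<^sub>\<infinity> y. \<bar>pmf (K1 x) y - pmf (K2 x) y\<bar>)" .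
  qed
  finally show ?thesis by (simp add: J1_def J2_def)
qed

lemma absdiff_le2: "(\<Sum>\<^sub>\<infinity> y. \<bar>pmf p y - pmf p' y\<bar>) \<le> 2"
proof -
  have "(\<Sum>\<^sub>\<infinity> y. \<bar>pmf p y - pmf p' y\<bar>) \<le> (\<Sum>\<^sub>\<infinity> y. pmf p y + pmf p' y)"
    by (intro infsum_mono absdiff_summable summable_on_add pmf_summable_on) (auto simp: abs_le_iff)
  also have "\<dots> = infsum (pmf p) UNIV + infsum (pmf p') UNIV"
    by (intro infsum_add pmf_summable_on)
  also have "\<dots> = 2" by (simp flip: prob_infsum)
  finally show ?thesis .
qed

lemma expectation_infsum:
  fixes f :: "'a \<Rightarrow> real"
  assumes "\<And>x. \<bar>f x\<bar> \<le> B"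
  shows "measure_pmf.expectation p f = (\<Sum>\<^sub>\<infinity> x. pmf p x * f x)"
proof -
  have "Infinite_Set_Sum.abs_summable_on (\<lambda>x. pmf p x * f x) UNIV"
  proof (rule abs_summable_on_comparison_test')
    show "Infinite_Set_Sum.abs_summable_on (\<lambda>x. pmf p x * B) UNIV"
      by (intro abs_summable_on_cmult_left pmf_abs_summable)
    show "norm (pmf p x * f x) \<le> pmf p x * B" for x
      using assms[of x] by (simp add: abs_mult mult_left_mono)
  qed
  then show ?thesis by (simp add: pmf_expectation_eq_infsetsum infsetsum_infsum)
qed

theorem theorem5:
  fixes PX :: "nat \<Rightarrow> 'x::countable pmf"
    and PZX :: "nat \<Rightarrow> 'x \<Rightarrow> 'z::countable pmf"
    and W :: "nat \<Rightarrow> 'x \<Rightarrow> 'y::countable pmf"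
    and \<epsilon> \<gamma> :: real
  assumes "approximating_source PX PZX W"
    and "0 < \<epsilon>" and "\<epsilon> < 1" and "0 < \<gamma>"
  shows "(\<lambda>n. measure_pmf.expectation (PX n)
            (\<lambda>x. measure lborel
               {\<delta> \<in> {0..<1 - \<epsilon>}. cfun (PZX n x) (\<delta> + \<epsilon>) - cfun (W n x) \<delta> < - \<gamma>}))
         \<longlonglongrightarrow> 0"
proof -
  obtain \<phi> :: "nat \<Rightarrow> 'x \<Rightarrow> 'z \<Rightarrow> 'y" where lim:
    "(\<lambda>n. var_dist (joint_channel (PX n) (W n)) (joint_simulated (PX n) (PZX n) (\<phi> n))) \<longlonglongrightarrow> 0"
    using assms(1) unfolding approximating_source_def by blast
  define c where "c = (1 - exp (-\<gamma>)) * \<epsilon>"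
  have cpos: "c > 0" using assms by (simp add: c_def)
  define S where "S n x = {\<delta> \<in> {0..<1 - \<epsilon>}. cfun (PZX n x) (\<delta> + \<epsilon>) - cfun (W n x) \<delta> < - \<gamma>}" for n x
  define f where "f n x = measure lborel (S n x)" for n x
  define d where "d n x = (\<Sum>\<^sub>\<infinity> y. \<bar>pmf (W n x) y - pmf (map_pmf (\<phi> n x) (PZX n x)) y\<bar>)" for n x
  define V where "V n = var_dist (joint_channel (PX n) (W n)) (joint_simulated (PX n) (PZX n) (\<phi> n))" for n
  have d_nonneg: "0 \<le> d n x" for n x unfolding d_def by (intro infsum_nonneg) auto
  have d_le2: "d n x \<le> 2" for n x unfolding d_def by (rule absdiff_le2)
  have f_nonneg: "0 \<le> f n x" for n x by (simp add: f_def)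
  have f_le1: "f n x \<le> 1" for n x
  proof (cases "S n x \<in> sets lborel")
    case True
    have "f n x \<le> measure lborel {0..<1-\<epsilon>}"
    proof -
      have sub: "S n x \<subseteq> {0..<1-\<epsilon>}" by (auto simp: S_def)
      have fm: "{0..<1-\<epsilon>} \<in> fmeasurable lborel" unfolding fmeasurable_def
        using assms by (simp add: emeasure_lborel_Ico)
      show ?thesis unfolding f_def by (rule measure_mono_fmeasurable[OF sub True fm])
    qed
    then show ?thesis using assms by simp
  next
    case False
    then show ?thesis by (simp add: f_def measure_notin_sets)
  qed
  have f_le: "f n x \<le> d n x / c" for n x
  proof (cases "d n x < c")
    case True
    have "S n x = {}"
    proof (rule ccontr)
      assume "S n x \<noteq> {}"
      then obtain \<delta> where \<delta>: "0 \<le> \<delta>" "\<delta> < 1 - \<epsilon>"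
        "cfun (PZX n x) (\<delta> + \<epsilon>) - cfun (W n x) \<delta> < - \<gamma>" by (auto simp: S_def)
      have "c \<le> d n x" unfolding c_def d_def
        by (rule key) (use \<delta> assms in auto)
      then show False using True by simp
    qed
    then show ?thesis using d_nonneg cpos by (simp add: f_def)
  next
    case False
    then have "1 \<le> d n x / c" using cpos by (simp add: field_simps)
    then show ?thesis using f_le1[of n x] by linarith
  qed
  have V_eq: "V n = (\<Sum>\<^sub>\<infinity> x. pmf (PX n) x * d n x)" for n
  proof -
    have "joint_simulated (PX n) (PZX n) (\<phi> n) = bind_pmf (PX n) (\<lambda>x. map_pmf (Pair x) (map_pmf (\<phi> n x) (PZX n x)))"
      by (simp add: joint_simulated_def map_pmf_comp)
    moreover have "joint_channel (PX n) (W n) = bind_pmf (PX n) (\<lambda>x. map_pmf (Pair x) (W n x))"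
      by (simp add: joint_channel_def)
    ultimately show ?thesis by (simp add: V_def var_dist_joint d_def)
  qed
  have E_eq: "measure_pmf.expectation (PX n) (f n) = (\<Sum>\<^sub>\<infinity> x. pmf (PX n) x * f n x)" for n
    by (rule expectation_infsum[where B=1]) (use f_nonneg f_le1 in auto)
  have E_le: "measure_pmf.expectation (PX n) (f n) \<le> V n / c" for n
  proof -
    have s1: "(\<lambda>x. pmf (PX n) x * f n x) summable_on UNIV"
      by (rule summable_on_comparison_test[OF pmf_summable_on])
        (use f_nonneg f_le1 in \<open>auto intro: mult_left_le\<close>)
    have s2: "(\<lambda>x. pmf (PX n) x * d n x * (1/c)) summable_on UNIV"
    proof -
      have "(\<lambda>x. 2/c * pmf (PX n) x) summable_on UNIV" by (intro summable_on_cmult_right pmf_summable_on)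
      then show ?thesis by (rule summable_on_comparison_test)
        (use d_nonneg d_le2 cpos in \<open>auto intro: mult_right_mono simp: field_simps\<close>)
    qed
    have "(\<Sum>\<^sub>\<infinity> x. pmf (PX n) x * f n x) \<le> (\<Sum>\<^sub>\<infinity> x. pmf (PX n) x * d n x * (1/c))"
      by (rule infsum_mono[OF s1 s2]) 
        (use mult_left_mono[OF f_le pmf_nonneg] in \<open>simp only: times_divide_eq_right mult.right_neutral\<close>)
    also have "\<dots> = (\<Sum>\<^sub>\<infinity> x. pmf (PX n) x * d n x) * (1/c)" by (rule infsum_cmult_left')
    also have "\<dots> = V n / c" unfolding V_eq by (simp only: divide_inverse mult_1)
    finally show ?thesis using E_eq by (simp only:)
  qed
  have E_ge: "0 \<le> measure_pmf.expectation (PX n) (f n)" for n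
    using E_eq by (simp add: f_nonneg infsum_nonneg)
  have "(\<lambda>n. V n / c) \<longlonglongrightarrow> 0 / c" using lim unfolding V_def by (intro tendsto_divide) (use cpos in auto)
  then have limV: "(\<lambda>n. V n / c) \<longlonglongrightarrow> 0" by simp
  have ev1: "eventually (\<lambda>n. 0 \<le> measure_pmf.expectation (PX n) (f n)) sequentially"
    using E_ge by (intro always_eventually allI)
  have ev2: "eventually (\<lambda>n. measure_pmf.expectation (PX n) (f n) \<le> V n / c) sequentially"
    using E_le by (intro always_eventually allI)
  have "(\<lambda>n. measure_pmf.expectation (PX n) (f n)) \<longlonglongrightarrow> 0"
    by (rule tendsto_sandwich[OF ev1 ev2 tendsto_const limV])
  then show ?thesis unfolding f_def S_def .
qed

end
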